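(* Let $C$ be a countable torsion abelian group and $A$ a countable abelian group. For a prime $p$ let $A_p\subseteq A$ and $C_p\subseteq C$ be the $p$-primary subgroups. Then $\mathrm{PExt}(C,A)$ and $\prod_{p\text{ prime}}\mathrm{PExt}(C_p,A_p)$ are Borel-definably isomorphic.
   Context: For countable $C,A$: $\mathsf Z(C,A)$ is the Polish group (closed in $A^{C\times C}$) of normalized symmetric 2-cocycles ($c(x,0)=0$, $c(x,y)=c(y,x)$, $c(y,z)-c(x+y,z)+c(x,y+z)-c(x,y)=0$), $\mathsf B(C,A)$ the subgroup of coboundaries $c(x,y)=\phi(y)-\phi(x+y)+\phi(x)$, $\mathsf B_{\mathrm w}(C,A)$ the subgroup of cocycles whose restriction to $S\times S$ is a coboundary for every finite $S\le C$; $\mathrm{PExt}(C,A)=\mathsf B_{\mathrm w}(C,A)/\mathsf B(C,A)$, a group with a Polish cover. The product of groups with a Polish cover $\hat G_p/N_p$ is $\prod_p\hat G_p/\prod_pN_p$. A homomorphism between groups with a Polish cover $\hat G/N\to\hat H/M$ is Borel-definable if it is induced by a Borel function $\hat G\to\hat H$; a Borel-definable isomorphism is a bijective Borel-definable homomorphism. *)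

theory Defs
  imports "HOL-Analysis.Analysis" "HOL-Computational_Algebra.Primes"
begin

text \<open>Abelian groups are represented as subsets of an ambient type of class ab_group_add.\<close>

definition subgrp :: "'c::ab_group_add set \<Rightarrow> bool" where
  "subgrp C \<longleftrightarrow> 0 \<in> C \<and> (\<forall>x\<in>C. \<forall>y\<in>C. x + y \<in> C) \<and> (\<forall>x\<in>C. - x \<in> C)"

definition nsmul :: "nat \<Rightarrow> 'c::ab_group_add \<Rightarrow> 'c" where
  "nsmul n x = (((+) x) ^^ n) 0"

definition torsion_grp :: "'c::ab_group_add set \<Rightarrow> bool" where
  "torsion_grp C \<longleftrightarrow> (\<forall>x\<in>C. \<exists>n>0. nsmul n x = 0)"

definition primary :: "'c::ab_group_add set \<Rightarrow> nat \<Rightarrow> 'c set" where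
  "primary C p = {x \<in> C. \<exists>k. nsmul (p ^ k) x = 0}"

definition zcoc :: "'c::ab_group_add set \<Rightarrow> 'a::ab_group_add set \<Rightarrow> ('c \<times> 'c \<Rightarrow> 'a) set" where
  "zcoc C A = {c \<in> (C \<times> C) \<rightarrow>\<^sub>E A.
      (\<forall>x\<in>C. c (x, 0) = 0) \<and> (\<forall>x\<in>C. \<forall>y\<in>C. c (x, y) = c (y, x)) \<and>
      (\<forall>x\<in>C. \<forall>y\<in>C. \<forall>z\<in>C. c (y, z) - c (x + y, z) + c (x, y + z) - c (x, y) = 0)}"

definition is_cobd_on :: "'c::ab_group_add set \<Rightarrow> 'a::ab_group_add set \<Rightarrow> ('c \<times> 'c \<Rightarrow> 'a) \<Rightarrow> bool" where
  "is_cobd_on S A c \<longleftrightarrow> (\<exists>\<phi>. (\<forall>x\<in>S. \<phi> x \<in> A) \<and>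
      (\<forall>x\<in>S. \<forall>y\<in>S. c (x, y) = \<phi> y - \<phi> (x + y) + \<phi> x))"

definition bcoc :: "'c::ab_group_add set \<Rightarrow> 'a::ab_group_add set \<Rightarrow> ('c \<times> 'c \<Rightarrow> 'a) set" where
  "bcoc C A = {c \<in> zcoc C A. is_cobd_on C A c}"

definition bwcoc :: "'c::ab_group_add set \<Rightarrow> 'a::ab_group_add set \<Rightarrow> ('c \<times> 'c \<Rightarrow> 'a) set" where
  "bwcoc C A = {c \<in> zcoc C A. \<forall>S. finite S \<and> subgrp S \<and> S \<subseteq> C \<longrightarrow> is_cobd_on S A c}"

text \<open>The Polish space A^(C x C) with its Borel sigma-algebra (product of discrete spaces).\<close>
definition cocM :: "'c::ab_group_add set \<Rightarrow> 'a::ab_group_add set \<Rightarrow> ('c \<times> 'c \<Rightarrow> 'a) measure" where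
  "cocM C A = PiM (C \<times> C) (\<lambda>_. count_space A)"

definition cadd :: "'c::ab_group_add set \<Rightarrow> ('c \<times> 'c \<Rightarrow> 'a::ab_group_add) \<Rightarrow> ('c \<times> 'c \<Rightarrow> 'a) \<Rightarrow> ('c \<times> 'c \<Rightarrow> 'a)" where
  "cadd C c d = (\<lambda>z\<in>C \<times> C. c z + d z)"

definition csub :: "'c::ab_group_add set \<Rightarrow> ('c \<times> 'c \<Rightarrow> 'a::ab_group_add) \<Rightarrow> ('c \<times> 'c \<Rightarrow> 'a) \<Rightarrow> ('c \<times> 'c \<Rightarrow> 'a)" where
  "csub C c d = (\<lambda>z\<in>C \<times> C. c z - d z)"

text \<open>The product over primes p of the groups with Polish cover PExt(C_p,A_p).\<close>
definition primes_set :: "nat set" where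
  "primes_set = {p. prime p}"

definition prodM :: "'c::ab_group_add set \<Rightarrow> 'a::ab_group_add set \<Rightarrow> (nat \<Rightarrow> 'c \<times> 'c \<Rightarrow> 'a) measure" where
  "prodM C A = PiM primes_set (\<lambda>p. cocM (primary C p) (primary A p))"

definition prod_bw :: "'c::ab_group_add set \<Rightarrow> 'a::ab_group_add set \<Rightarrow> (nat \<Rightarrow> 'c \<times> 'c \<Rightarrow> 'a) set" where
  "prod_bw C A = (\<Pi>\<^sub>E p\<in>primes_set. bwcoc (primary C p) (primary A p))"

definition prod_b :: "'c::ab_group_add set \<Rightarrow> 'a::ab_group_add set \<Rightarrow> (nat \<Rightarrow> 'c \<times> 'c \<Rightarrow> 'a) set" where
  "prod_b C A = (\<Pi>\<^sub>E p\<in>primes_set. bcoc (primary C p) (primary A p))"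

definition padd :: "'c::ab_group_add set \<Rightarrow> (nat \<Rightarrow> 'c \<times> 'c \<Rightarrow> 'a::ab_group_add) \<Rightarrow> (nat \<Rightarrow> 'c \<times> 'c \<Rightarrow> 'a) \<Rightarrow> (nat \<Rightarrow> 'c \<times> 'c \<Rightarrow> 'a)" where
  "padd C F G = (\<lambda>p\<in>primes_set. cadd (primary C p) (F p) (G p))"

definition psub :: "'c::ab_group_add set \<Rightarrow> (nat \<Rightarrow> 'c \<times> 'c \<Rightarrow> 'a::ab_group_add) \<Rightarrow> (nat \<Rightarrow> 'c \<times> 'c \<Rightarrow> 'a) \<Rightarrow> (nat \<Rightarrow> 'c \<times> 'c \<Rightarrow> 'a)" where
  "psub C F G = (\<lambda>p\<in>primes_set. csub (primary C p) (F p) (G p))"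

text \<open>Borel-definable isomorphism between groups with a Polish cover G1/N1 and G2/N2,
  where G_i is a Borel subset of the Polish space (measurable space) M_i, with group
  operations add_i, sub_i.\<close>
definition bdef_iso ::
  "'x measure \<Rightarrow> 'x set \<Rightarrow> 'x set \<Rightarrow> ('x \<Rightarrow> 'x \<Rightarrow> 'x) \<Rightarrow> ('x \<Rightarrow> 'x \<Rightarrow> 'x) \<Rightarrow>
   'y measure \<Rightarrow> 'y set \<Rightarrow> 'y set \<Rightarrow> ('y \<Rightarrow> 'y \<Rightarrow> 'y) \<Rightarrow> ('y \<Rightarrow> 'y \<Rightarrow> 'y) \<Rightarrow>
   ('x \<Rightarrow> 'y) \<Rightarrow> bool" where
  "bdef_iso M1 G1 N1 add1 sub1 M2 G2 N2 add2 sub2 f \<longleftrightarrow>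
     f \<in> measurable (restrict_space M1 G1) M2 \<and>
     (\<forall>x\<in>G1. f x \<in> G2) \<and>
     (\<forall>x\<in>G1. \<forall>y\<in>G1. sub1 x y \<in> N1 \<longleftrightarrow> sub2 (f x) (f y) \<in> N2) \<and>
     (\<forall>x\<in>G1. \<forall>y\<in>G1. sub2 (f (add1 x y)) (add2 (f x) (f y)) \<in> N2) \<and>
     (\<forall>z\<in>G2. \<exists>x\<in>G1. sub2 z (f x) \<in> N2)"

end

theory Submission imports Defs begin

lemma nsmul_0 [simp]: "nsmul 0 x = 0" by (simp add: nsmul_def)
lemma nsmul_Suc: "nsmul (Suc n) x = x + nsmul n x" by (simp add: nsmul_def)
lemma nsmul_1 [simp]: "nsmul 1 x = x" by (simp add: nsmul_def)
lemma nsmul_Suc0 [simp]: "nsmul (Suc 0) x = x" by (simp add: nsmul_def)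
lemma nsmul_add: "nsmul (m + n) x = nsmul m x + nsmul n x"
  by (induction m) (simp_all add: nsmul_Suc add.assoc)
lemma nsmul_mult: "nsmul (m * n) x = nsmul m (nsmul n x)"
  by (induction m) (simp_all add: nsmul_Suc nsmul_add)
lemma nsmul_zero [simp]: "nsmul n (0::'a::ab_group_add) = 0"
  by (induction n) (simp_all add: nsmul_Suc)
lemma nsmul_plus: "nsmul n (x + y) = nsmul n x + nsmul n (y::'a::ab_group_add)"
  by (induction n) (simp_all add: nsmul_Suc algebra_simps)
lemma nsmul_uminus: "nsmul n (- x) = - nsmul n (x::'a::ab_group_add)"
  by (induction n) (simp_all add: nsmul_Suc)
lemma nsmul_diff: "nsmul n (x - y) = nsmul n x - nsmul n (y::'a::ab_group_add)"
  using nsmul_plus[of n x "-y"] nsmul_uminus[of n y] by simp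

lemma nsmul_gcd:
  assumes "nsmul a z = 0" "nsmul b z = 0"
  shows "nsmul (gcd a b) z = 0"
proof (cases "a = 0")
  case True then show ?thesis using assms by simp
next
  case False
  then obtain u v where "a * u = b * v + gcd a b" using bezout_nat by blast
  then have "nsmul (a * u) z = nsmul (b * v) z + nsmul (gcd a b) z" by (simp add: nsmul_add)
  then show ?thesis using assms by (simp add: nsmul_mult mult.commute[of a] mult.commute[of b])
qed

lemma nsmul_coprime_zero:
  assumes "nsmul a z = 0" "nsmul b z = 0" "coprime a b"
  shows "z = 0"
  using nsmul_gcd[OF assms(1,2)] assms(3) by simp

lemma subgrp_diff: "subgrp C \<Longrightarrow> x \<in> C \<Longrightarrow> y \<in> C \<Longrightarrow> x - y \<in> C"
  unfolding subgrp_def by (metis diff_conv_add_uminus)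
lemma subgrp_add: "subgrp C \<Longrightarrow> x \<in> C \<Longrightarrow> y \<in> C \<Longrightarrow> x + y \<in> C"
  unfolding subgrp_def by blast
lemma subgrp_uminus: "subgrp C \<Longrightarrow> x \<in> C \<Longrightarrow> - x \<in> C"
  unfolding subgrp_def by blast
lemma subgrp_0: "subgrp C \<Longrightarrow> 0 \<in> C"
  unfolding subgrp_def by blast
lemma subgrp_nsmul: "subgrp C \<Longrightarrow> x \<in> C \<Longrightarrow> nsmul n x \<in> C"
  by (induction n) (simp_all add: nsmul_Suc subgrp_add subgrp_0)
lemma subgrp_sum:
  assumes "subgrp C" "\<And>i. i \<in> I \<Longrightarrow> f i \<in> C" shows "sum f I \<in> C"
  using assms(2)
proof (induction I rule: infinite_finite_induct)
  case (infinite I) then show ?case using assms(1) by (simp add: subgrp_0)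
next
  case empty then show ?case using assms(1) by (simp add: subgrp_0)
next
  case (insert i I) then show ?case using assms(1) by (simp add: subgrp_add)
qed

lemma primary_sub: "primary C p \<subseteq> C" by (auto simp: primary_def)

lemma primary_subgrp:
  assumes "subgrp C" shows "subgrp (primary C p)"
  unfolding subgrp_def primary_def
proof (intro conjI ballI)
  show "0 \<in> {x \<in> C. \<exists>k. nsmul (p ^ k) x = 0}" using assms subgrp_0 by auto
next
  fix x y assume x: "x \<in> {x \<in> C. \<exists>k. nsmul (p ^ k) x = 0}" and y: "y \<in> {x \<in> C. \<exists>k. nsmul (p ^ k) x = 0}"
  then obtain k l where k: "nsmul (p^k) x = 0" and l: "nsmul (p^l) y = 0" by auto
  have e1: "p^(k+l) = p^l * p^k" "p^(k+l) = p^k * p^l" by (simp_all add: power_add)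
  have "nsmul (p^(k+l)) x = 0" by (simp only: e1(1) nsmul_mult k nsmul_zero)
  moreover have "nsmul (p^(k+l)) y = 0" by (simp only: e1(2) nsmul_mult l nsmul_zero)
  ultimately have "nsmul (p^(k+l)) (x+y) = 0" by (simp add: nsmul_plus)
  then show "x + y \<in> {x \<in> C. \<exists>k. nsmul (p ^ k) x = 0}" using x y assms subgrp_add by auto
next
  fix x assume x: "x \<in> {x \<in> C. \<exists>k. nsmul (p ^ k) x = 0}"
  then obtain k where k: "nsmul (p^k) x = 0" by auto
  then show "- x \<in> {x \<in> C. \<exists>k. nsmul (p ^ k) x = 0}" using x assms subgrp_uminus
    by (auto simp: nsmul_uminus)
qed

lemma primaryI: "x \<in> C \<Longrightarrow> nsmul (p^k) x = 0 \<Longrightarrow> x \<in> primary C p"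
  by (auto simp: primary_def)

lemma primary_from_nsmul:
  assumes "a \<in> A" "nsmul (p^k) a \<in> primary A p"
  shows "a \<in> primary A p"
proof -
  obtain j where "nsmul (p^j) (nsmul (p^k) a) = 0" using assms(2) by (auto simp: primary_def)
  then have "nsmul (p^(j+k)) a = 0" by (simp add: power_add nsmul_mult)
  then show ?thesis by (rule primaryI[OF assms(1)])
qed


lemma nsmul_kill_mult:
  assumes "nsmul a z = (0::'a::ab_group_add)"
  shows "nsmul (b * a) z = 0" "nsmul (a * b) z = 0"
  by (simp_all only: nsmul_mult assms nsmul_zero mult.commute[of a b])

lemma primary_kill2:
  assumes "nsmul (p^k) x = 0" "nsmul (p^l) y = (0::'a::ab_group_add)"
  shows "nsmul (p^(k+l)) x = 0" "nsmul (p^(k+l)) y = 0"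
proof -
  have e1: "p^(k+l) = p^l * p^k" "p^(k+l) = p^k * p^l" by (simp_all add: power_add)
  show "nsmul (p^(k+l)) x = 0" by (simp only: e1(1) nsmul_mult assms nsmul_zero)
  show "nsmul (p^(k+l)) y = 0" by (simp only: e1(2) nsmul_mult assms nsmul_zero)
qed

definition pcomp :: "'c::ab_group_add set \<Rightarrow> nat \<Rightarrow> 'c \<Rightarrow> 'c" where
  "pcomp C p x = (THE y. y \<in> primary C p \<and> (\<exists>m. coprime m p \<and> nsmul m (x - y) = 0))"

lemma pcomp_unique:
  assumes "y1 \<in> primary C p" "coprime m1 p" "nsmul m1 (x - y1) = 0"
    and "y2 \<in> primary C p" "coprime m2 p" "nsmul m2 (x - y2) = 0"
  shows "y1 = y2"
proof -
  obtain k l where k: "nsmul (p^k) y1 = 0" and l: "nsmul (p^l) y2 = 0"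
    using assms(1,4) by (auto simp: primary_def)
  have a: "nsmul (p^(k+l)) (y1 - y2) = 0"
    using primary_kill2[OF k l] by (simp add: nsmul_diff)
  have b: "nsmul (m1*m2) (y1 - y2) = 0"
  proof -
    have "nsmul (m1*m2) (y1 - y2) = nsmul (m1*m2) (x - y2) - nsmul (m1*m2) (x - y1)"
      by (simp add: nsmul_diff)
    also have "\<dots> = 0" using nsmul_kill_mult(1)[OF assms(6), of m1] nsmul_kill_mult(2)[OF assms(3), of m2]
      by simp
    finally show ?thesis .
  qed
  have "coprime (p^(k+l)) (m1 * m2)" using assms(2,5)
    by (simp add: coprime_commute)
  then have "y1 - y2 = 0" using nsmul_coprime_zero[OF a b] by simp
  then show ?thesis by simp
qed

lemma pcomp_eq:
  assumes "y \<in> primary C p" "coprime m p" "nsmul m (x - y) = 0"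
  shows "pcomp C p x = y"
  unfolding pcomp_def
  by (rule the_equality) (use assms pcomp_unique in blast)+

lemma pcomp_exists:
  assumes "subgrp C" "x \<in> C" "nsmul (p^a * m) x = 0" "coprime m p" "m \<noteq> 0"
  shows "\<exists>y. y \<in> primary C p \<and> nsmul m (x - y) = 0"
proof -
  have "coprime m (p^a)" using assms(4) by simp
  then have g: "gcd m (p^a) = 1" by simp
  obtain u v where uv: "m * u = p^a * v + 1" using bezout_nat[OF assms(5), of "p^a"] g by auto
  define y where "y = nsmul (m * u) x"
  have "nsmul (p^a) y = nsmul (u * (p^a * m)) x"
    unfolding y_def by (simp add: nsmul_mult[symmetric] ac_simps)
  also have "\<dots> = 0" by (simp only: nsmul_mult[of u] assms(3) nsmul_zero)
  finally have y1: "y \<in> primary C p" using assms(1,2) y_def subgrp_nsmul primaryI by metis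
  have "m * (m * u) = v * (p^a * m) + m" using uv by (simp add: algebra_simps)
  then have "nsmul m y = nsmul m x" unfolding y_def
    by (simp only: nsmul_mult[symmetric] nsmul_add) (simp only: nsmul_mult[of v] assms(3) nsmul_zero add_0)
  then have "nsmul m (x - y) = 0" by (simp add: nsmul_diff)
  then show ?thesis using y1 by blast
qed

locale tors =
  fixes C :: "'c::ab_group_add set"
  assumes sg: "subgrp C" and tor: "torsion_grp C"
begin

lemma tor_ex: "x \<in> C \<Longrightarrow> \<exists>n>0. nsmul n x = 0"
  using tor by (auto simp: torsion_grp_def)

lemma pcomp_spec:
  assumes "x \<in> C" "prime p"
  shows "pcomp C p x \<in> primary C p \<and> (\<exists>m. coprime m p \<and> m \<noteq> 0 \<and> nsmul m (x - pcomp C p x) = 0)"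
proof -
  obtain n where n: "n > 0" "nsmul n x = 0" using tor_ex[OF assms(1)] by blast
  obtain m where m': "n = p ^ multiplicity p n * m" "\<not> p dvd m" by (rule multiplicity_decompose'[of n p]) (use n assms(2) in auto)
  then obtain a where m: "n = p ^ a * m" "\<not> p dvd m" by blast
  have cm: "coprime m p" using prime_imp_coprime[OF assms(2) m(2)] by (simp add: coprime_commute)
  have m0: "m \<noteq> 0" using m n by auto
  have "nsmul (p ^ a * m) x = 0" using n m by simp
  then obtain y where y: "y \<in> primary C p" "nsmul m (x - y) = 0"
    using pcomp_exists[OF sg assms(1) _ cm m0] by blast
  have "pcomp C p x = y" using pcomp_eq[OF y(1) cm y(2)] .
  then show ?thesis using y cm m0 by blast
qed

lemma pcomp_primary: "x \<in> C \<Longrightarrow> prime p \<Longrightarrow> pcomp C p x \<in> primary C p"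
  using pcomp_spec by blast

lemma pcomp_in: "x \<in> C \<Longrightarrow> prime p \<Longrightarrow> pcomp C p x \<in> C"
  using pcomp_primary primary_sub by blast

lemma pcomp_add:
  assumes "x \<in> C" "y \<in> C" "prime p"
  shows "pcomp C p (x + y) = pcomp C p x + pcomp C p y"
proof -
  obtain m1 where m1: "coprime m1 p" "nsmul m1 (x - pcomp C p x) = 0" using pcomp_spec[OF assms(1,3)] by blast
  obtain m2 where m2: "coprime m2 p" "nsmul m2 (y - pcomp C p y) = 0" using pcomp_spec[OF assms(2,3)] by blast
  have "nsmul (m1 * m2) ((x + y) - (pcomp C p x + pcomp C p y))
      = nsmul (m1 * m2) (x - pcomp C p x) + nsmul (m1 * m2) (y - pcomp C p y)"
    by (simp add: nsmul_plus[symmetric] algebra_simps)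
  also have "\<dots> = 0" using nsmul_kill_mult(2)[OF m1(2), of m2] nsmul_kill_mult(1)[OF m2(2), of m1]
    by simp
  finally have "nsmul (m1 * m2) ((x + y) - (pcomp C p x + pcomp C p y)) = 0" .
  moreover have "pcomp C p x + pcomp C p y \<in> primary C p"
    using pcomp_primary assms subgrp_add primary_subgrp sg by blast
  moreover have "coprime (m1 * m2) p" using m1 m2 by simp
  ultimately show ?thesis using pcomp_eq by blast
qed

lemma pcomp_0: "pcomp C p 0 = 0"
  by (rule pcomp_eq[of _ _ _ 1]) (auto simp: primary_def sg subgrp_0 intro: exI[of _ 0])

lemma pcomp_diff:
  assumes "x \<in> C" "y \<in> C" "prime p"
  shows "pcomp C p (x - y) = pcomp C p x - pcomp C p y"
  using pcomp_add[of "x - y" y p] assms subgrp_diff[OF sg] by simp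

lemma pcomp_uminus:
  assumes "x \<in> C" "prime p"
  shows "pcomp C p (- x) = - pcomp C p x"
  using pcomp_diff[of 0 x p] assms subgrp_0[OF sg] pcomp_0 by simp

lemma pcomp_self: "z \<in> primary C p \<Longrightarrow> pcomp C p z = z"
  by (rule pcomp_eq[of _ _ _ 1]) auto

lemma pcomp_other:
  assumes "z \<in> primary C q" "prime p" "prime q" "p \<noteq> q"
  shows "pcomp C p z = 0"
proof -
  obtain k where k: "nsmul (q^k) z = 0" using assms(1) by (auto simp: primary_def)
  have "coprime (q^k) p" using primes_coprime[OF assms(3,2)] assms(4) by simp
  then show ?thesis
    by (intro pcomp_eq[of _ _ _ "q^k"]) (auto simp: primary_def sg subgrp_0 k intro: exI[of _ 0])
qed

lemma pcomp_ndvd: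
  assumes "nsmul n x = 0" "prime p" "\<not> p dvd n"
  shows "pcomp C p x = 0"
proof -
  have "coprime n p" using prime_imp_coprime[OF assms(2,3)] by (simp add: coprime_commute)
  then show ?thesis
    by (intro pcomp_eq[of _ _ _ n]) (auto simp: primary_def sg subgrp_0 assms(1) intro: exI[of _ 0])
qed

lemma decomp:
  assumes "x \<in> C" "nsmul n x = 0" "n > 0" "finite Q" "\<forall>q\<in>Q. prime q"
    "\<forall>q. prime q \<and> q dvd n \<longrightarrow> q \<in> Q"
  shows "(\<Sum>q\<in>Q. pcomp C q x) = x"
  using assms
proof (induction n arbitrary: x Q rule: less_induct)
  case (less n)
  show ?case
  proof (cases "n = 1")
    case True
    then have "x = 0" using less.prems by simp
    then show ?thesis by (simp add: pcomp_0)
  next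
    case False
    obtain p where p: "prime p" "p dvd n" using prime_factor_nat[OF False] by blast
    obtain m where m': "n = p ^ multiplicity p n * m" "\<not> p dvd m" by (rule multiplicity_decompose'[of n p]) (use less.prems p in auto)
    then obtain a where m: "n = p ^ a * m" "\<not> p dvd m" by blast
    have cm: "coprime m p" using prime_imp_coprime[OF p(1) m(2)] by (simp add: coprime_commute)
    have m0: "m \<noteq> 0" using m less.prems by auto
    have k0: "a \<noteq> 0"
    proof
      assume "a = 0"
      then have "n = m" using m(1) by simp
      then show False using m(2) p(2) by simp
    qed
    have "p \<le> p ^ a"
      using k0 prime_gt_0_nat[OF p(1)] by (simp add: self_le_power)
    then have P2: "2 \<le> p ^ a" using prime_ge_2_nat[OF p(1)] by linarith
    have "1 * m < p ^ a * m"
      using P2 m0 by (intro mult_strict_right_mono) auto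
    then have mn: "m < n" using m(1) by simp
    have "nsmul (p ^ a * m) x = 0" using less.prems(2) m by simp
    then obtain y where y: "y \<in> primary C p" "nsmul m (x - y) = 0"
      using pcomp_exists[OF sg less.prems(1) _ cm m0] by blast
    have py: "pcomp C p x = y" using pcomp_eq[OF y(1) cm y(2)] .
    have xy: "x - y \<in> C" using y(1) primary_sub less.prems(1) subgrp_diff[OF sg] by blast
    have IH: "(\<Sum>q\<in>Q - {p}. pcomp C q (x - y)) = x - y"
    proof (rule less.IH[OF mn xy y(2)])
      show "0 < m" using m0 by simp
      show "finite (Q - {p})" using less.prems by simp
      show "\<forall>q\<in>Q - {p}. prime q" using less.prems by simp
      show "\<forall>q. prime q \<and> q dvd m \<longrightarrow> q \<in> Q - {p}"
      proof (intro allI impI)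
        fix q assume q: "prime q \<and> q dvd m"
        then have "q dvd n" using m(1) by (simp add: dvd_mult)
        then have "q \<in> Q" using q less.prems by blast
        moreover have "q \<noteq> p" using q m(2) by blast
        ultimately show "q \<in> Q - {p}" by simp
      qed
    qed
    have "(\<Sum>q\<in>Q - {p}. pcomp C q (x - y)) = (\<Sum>q\<in>Q - {p}. pcomp C q x)"
    proof (rule sum.cong)
      fix q assume q: "q \<in> Q - {p}"
      have "pcomp C q y = 0" using pcomp_other[OF y(1)] q less.prems p by auto
      then show "pcomp C q (x - y) = pcomp C q x"
        using pcomp_diff[OF less.prems(1), of y q] y(1) primary_sub[of C p] q less.prems by auto
    qed simp
    moreover have "p \<in> Q" using p less.prems by blast
    ultimately have "(\<Sum>q\<in>Q. pcomp C q x) = y + (x - y)" using IH py less.prems(4)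
      by (simp add: sum.remove[of Q p])
    then show ?thesis by simp
  qed
qed

definition bd :: "'c \<Rightarrow> nat" where "bd x = (SOME n. n > 0 \<and> nsmul n x = 0)"

lemma bd_spec: "x \<in> C \<Longrightarrow> bd x > 0 \<and> nsmul (bd x) x = 0"
  unfolding bd_def using someI_ex[OF tor_ex] by blast

definition lo :: "nat \<Rightarrow> 'c \<Rightarrow> 'c" where "lo N x = (\<Sum>p\<in>{p. prime p \<and> p \<le> N}. pcomp C p x)"

lemma decomp_bd:
  assumes "x \<in> C" "bd x \<le> N"
  shows "lo N x = x"
  unfolding lo_def
  using bd_spec[OF assms(1)] assms
  by (intro decomp[of _ "bd x"]) (auto dest: dvd_imp_le)

lemma pcomp_big:
  assumes "x \<in> C" "prime p" "bd x < p"
  shows "pcomp C p x = 0"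
  using bd_spec[OF assms(1)] assms pcomp_ndvd by (metis dvd_imp_le not_le)

end


definition cyc :: "'c::ab_group_add \<Rightarrow> 'c set" where "cyc x = range (\<lambda>i. nsmul i x)"

lemma nsmul_mod:
  assumes "nsmul n x = (0::'a::ab_group_add)"
  shows "nsmul i x = nsmul (i mod n) x"
proof -
  have "nsmul i x = nsmul (i div n * n + i mod n) x" by simp
  also have "\<dots> = nsmul (i mod n) x" by (simp only: nsmul_add nsmul_mult assms nsmul_zero add_0)
  finally show ?thesis .
qed

lemma cyc_finite:
  assumes "nsmul n x = 0" "n > 0"
  shows "finite (cyc x)"
proof -
  have "nsmul i x \<in> (\<lambda>i. nsmul i x) ` {..<n}" for i
    using nsmul_mod[OF assms(1), of i] assms(2) by (intro image_eqI[of _ _ "i mod n"]) auto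
  then have "cyc x \<subseteq> (\<lambda>i. nsmul i x) ` {..<n}"
    unfolding cyc_def by auto
  then show ?thesis using finite_surj by blast
qed

lemma cyc_subgrp:
  assumes "nsmul n x = 0" "n > 0"
  shows "subgrp (cyc x)"
  unfolding subgrp_def
proof (intro conjI ballI)
  show "0 \<in> cyc x" unfolding cyc_def by (auto intro: range_eqI[of _ _ 0])
next
  fix a b assume "a \<in> cyc x" "b \<in> cyc x"
  then obtain i j where "a = nsmul i x" "b = nsmul j x" by (auto simp: cyc_def)
  then have "a + b = nsmul (i + j) x" by (simp add: nsmul_add)
  then show "a + b \<in> cyc x" by (auto simp: cyc_def)
next
  fix a assume "a \<in> cyc x"
  then obtain i where i: "a = nsmul i x" by (auto simp: cyc_def)
  have "nsmul (i * (n - 1)) x + nsmul i x = nsmul (i * (n - 1) + i) x" by (simp add: nsmul_add)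
  also have "i * (n - 1) + i = i * n" using assms(2) by (cases n) (simp_all add: algebra_simps)
  also have "nsmul (i * n) x = 0" by (simp only: nsmul_mult assms(1) nsmul_zero)
  finally have "nsmul i x + nsmul (i * (n - 1)) x = 0" by (simp add: add.commute)
  then have "- a = nsmul (i * (n - 1)) x" unfolding i by (rule minus_unique)
  then show "- a \<in> cyc x" by (auto simp: cyc_def)
qed

lemma cyc_sub: "subgrp S \<Longrightarrow> x \<in> S \<Longrightarrow> cyc x \<subseteq> S"
  unfolding cyc_def using subgrp_nsmul by blast

lemma cyc_self: "x \<in> cyc x"
  unfolding cyc_def by (rule range_eqI[of _ _ 1]) simp

definition ssum :: "'c::ab_group_add set \<Rightarrow> 'c set \<Rightarrow> 'c set" where
  "ssum S T = (\<lambda>(a, b). a + b) ` (S \<times> T)"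

lemma ssum_finite: "finite S \<Longrightarrow> finite T \<Longrightarrow> finite (ssum S T)"
  unfolding ssum_def by simp

lemma ssum_subgrp:
  assumes "subgrp S" "subgrp T" shows "subgrp (ssum S T)"
  unfolding subgrp_def ssum_def
proof (intro conjI ballI)
  show "0 \<in> (\<lambda>(a, b). a + b) ` (S \<times> T)"
    using assms subgrp_0 by (auto intro!: image_eqI[of _ _ "(0,0)"])
next
  fix x y assume "x \<in> (\<lambda>(a, b). a + b) ` (S \<times> T)" "y \<in> (\<lambda>(a, b). a + b) ` (S \<times> T)"
  then obtain a b a' b' where "x = a + b" "y = a' + b'" "a \<in> S" "b \<in> T" "a' \<in> S" "b' \<in> T" by auto
  then show "x + y \<in> (\<lambda>(a, b). a + b) ` (S \<times> T)"
    using assms by (auto intro!: image_eqI[of _ _ "(a + a', b + b')"] simp: subgrp_add algebra_simps)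
next
  fix x assume "x \<in> (\<lambda>(a, b). a + b) ` (S \<times> T)"
  then obtain a b where "x = a + b" "a \<in> S" "b \<in> T" by auto
  then show "- x \<in> (\<lambda>(a, b). a + b) ` (S \<times> T)"
    using assms by (auto intro!: image_eqI[of _ _ "(- a, - b)"] simp: subgrp_uminus)
qed

lemma ssum_left: "subgrp T \<Longrightarrow> S \<subseteq> ssum S T"
  unfolding ssum_def using subgrp_0 by (force intro: image_eqI[of _ _ "(_, 0)"])

lemma ssum_right: "subgrp S \<Longrightarrow> T \<subseteq> ssum S T"
  unfolding ssum_def using subgrp_0 by (force intro: image_eqI[of _ _ "(0, _)"])

lemma ssum_sub: "subgrp U \<Longrightarrow> S \<subseteq> U \<Longrightarrow> T \<subseteq> U \<Longrightarrow> ssum S T \<subseteq> U"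
  unfolding ssum_def using subgrp_add by fastforce

lemma fin_subgrp2:
  assumes "subgrp U" "x \<in> U" "y \<in> U" "nsmul n x = 0" "n > 0" "nsmul m y = 0" "m > 0"
  shows "\<exists>S. finite S \<and> subgrp S \<and> S \<subseteq> U \<and> x \<in> S \<and> y \<in> S"
proof (intro exI conjI)
  let ?S = "ssum (cyc x) (cyc y)"
  show "finite ?S" using cyc_finite assms ssum_finite by blast
  show "subgrp ?S" using cyc_subgrp assms ssum_subgrp by blast
  show "?S \<subseteq> U" using cyc_sub assms ssum_sub by blast
  show "x \<in> ?S" using ssum_left cyc_subgrp[OF assms(6,7)] cyc_self by blast
  show "y \<in> ?S" using ssum_right cyc_subgrp[OF assms(4,5)] cyc_self by blast
qed

lemma primary_tors:
  assumes "x \<in> primary C p" "prime p"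
  shows "\<exists>n>0. nsmul n x = 0"
proof -
  obtain k where "nsmul (p^k) x = 0" using assms(1) by (auto simp: primary_def)
  moreover have "p^k > 0" using prime_gt_0_nat[OF assms(2)] by simp
  ultimately show ?thesis by blast
qed

lemma zcoc_D:
  assumes "c \<in> zcoc C A"
  shows "c \<in> (C \<times> C) \<rightarrow>\<^sub>E A" "\<And>x. x \<in> C \<Longrightarrow> c (x, 0) = 0"
    "\<And>x y. x \<in> C \<Longrightarrow> y \<in> C \<Longrightarrow> c (x, y) = c (y, x)"
    "\<And>x y z. x \<in> C \<Longrightarrow> y \<in> C \<Longrightarrow> z \<in> C \<Longrightarrow> c (y, z) - c (x + y, z) + c (x, y + z) - c (x, y) = 0"
  using assms unfolding zcoc_def by blast+

lemma zcoc_val: "c \<in> zcoc C A \<Longrightarrow> x \<in> C \<Longrightarrow> y \<in> C \<Longrightarrow> c (x, y) \<in> A"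
  unfolding zcoc_def by blast

lemma zcoc_out: "c \<in> zcoc C A \<Longrightarrow> z \<notin> C \<times> C \<Longrightarrow> c z = undefined"
  unfolding zcoc_def by (cases z) (auto simp: PiE_def extensional_def)

lemma zcoc_00: "subgrp C \<Longrightarrow> c \<in> zcoc C A \<Longrightarrow> c (0, 0) = 0"
  using zcoc_D(2) subgrp_0 by blast

lemma zcocI:
  assumes "\<And>x y. x \<in> C \<Longrightarrow> y \<in> C \<Longrightarrow> c (x, y) \<in> A" "\<And>z. z \<notin> C \<times> C \<Longrightarrow> c z = undefined"
    "\<And>x. x \<in> C \<Longrightarrow> c (x, 0) = 0"
    "\<And>x y. x \<in> C \<Longrightarrow> y \<in> C \<Longrightarrow> c (x, y) = c (y, x)"
    "\<And>x y z. x \<in> C \<Longrightarrow> y \<in> C \<Longrightarrow> z \<in> C \<Longrightarrow> c (y, z) - c (x + y, z) + c (x, y + z) - c (x, y) = 0"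
  shows "c \<in> zcoc C A"
  unfolding zcoc_def using assms by (auto simp: PiE_def extensional_def Pi_def)

lemma zcoc_cadd:
  assumes "subgrp C" "subgrp A" "c \<in> zcoc C A" "d \<in> zcoc C A"
  shows "cadd C c d \<in> zcoc C A"
proof (rule zcocI)
  fix x y z assume xyz: "x \<in> C" "y \<in> C" "z \<in> C"
  have s: "x + y \<in> C" "y + z \<in> C" using xyz assms(1) subgrp_add by blast+
  have "cadd C c d (y, z) - cadd C c d (x + y, z) + cadd C c d (x, y + z) - cadd C c d (x, y)
    = (c (y, z) - c (x + y, z) + c (x, y + z) - c (x, y)) + (d (y, z) - d (x + y, z) + d (x, y + z) - d (x, y))"
    using xyz s by (simp add: cadd_def algebra_simps)
  then show "cadd C c d (y, z) - cadd C c d (x + y, z) + cadd C c d (x, y + z) - cadd C c d (x, y) = 0"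
    using zcoc_D(4)[OF assms(3) xyz] zcoc_D(4)[OF assms(4) xyz] by simp
qed (use assms in \<open>auto simp: cadd_def zcoc_D zcoc_val subgrp_add subgrp_0\<close>)

lemma zcoc_csub:
  assumes "subgrp C" "subgrp A" "c \<in> zcoc C A" "d \<in> zcoc C A"
  shows "csub C c d \<in> zcoc C A"
proof (rule zcocI)
  fix x y z assume xyz: "x \<in> C" "y \<in> C" "z \<in> C"
  have s: "x + y \<in> C" "y + z \<in> C" using xyz assms(1) subgrp_add by blast+
  have "csub C c d (y, z) - csub C c d (x + y, z) + csub C c d (x, y + z) - csub C c d (x, y)
    = (c (y, z) - c (x + y, z) + c (x, y + z) - c (x, y)) - (d (y, z) - d (x + y, z) + d (x, y + z) - d (x, y))"
    using xyz s by (simp add: csub_def algebra_simps)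
  then show "csub C c d (y, z) - csub C c d (x + y, z) + csub C c d (x, y + z) - csub C c d (x, y) = 0"
    using zcoc_D(4)[OF assms(3) xyz] zcoc_D(4)[OF assms(4) xyz] by simp
qed (use assms in \<open>auto simp: csub_def zcoc_D zcoc_val subgrp_diff subgrp_0\<close>)

lemma bwcoc_cadd:
  assumes "subgrp C" "subgrp A" "c \<in> bwcoc C A" "d \<in> bwcoc C A"
  shows "cadd C c d \<in> bwcoc C A"
proof -
  have "is_cobd_on S A (cadd C c d)" if S: "finite S" "subgrp S" "S \<subseteq> C" for S
  proof -
    obtain \<phi> where \<phi>: "\<forall>x\<in>S. \<phi> x \<in> A" "\<forall>x\<in>S. \<forall>y\<in>S. c (x, y) = \<phi> y - \<phi> (x + y) + \<phi> x"
      using assms(3) S unfolding bwcoc_def is_cobd_on_def by blast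
    obtain \<psi> where \<psi>: "\<forall>x\<in>S. \<psi> x \<in> A" "\<forall>x\<in>S. \<forall>y\<in>S. d (x, y) = \<psi> y - \<psi> (x + y) + \<psi> x"
      using assms(4) S unfolding bwcoc_def is_cobd_on_def by blast
    show ?thesis unfolding is_cobd_on_def
      by (rule exI[of _ "\<lambda>x. \<phi> x + \<psi> x"])
        (use \<phi>(1) \<psi>(1) S assms(2) in \<open>auto simp: cadd_def subgrp_add \<phi>(2) \<psi>(2) algebra_simps\<close>)
  qed
  then show ?thesis using zcoc_cadd[OF assms(1,2)] assms(3,4) unfolding bwcoc_def by blast
qed


lemma telescope:
  assumes "\<And>i. i < n \<Longrightarrow> c (nsmul i z, z) = \<phi> z - \<phi> (nsmul i z + z) + \<phi> (nsmul i z)"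
  shows "(\<Sum>i<n. c (nsmul i z, z)) = nsmul n (\<phi> z) - \<phi> (nsmul n z) + \<phi> 0"
  using assms
proof (induction n)
  case 0 then show ?case by simp
next
  case (Suc n)
  have IH: "(\<Sum>i<n. c (nsmul i z, z)) = nsmul n (\<phi> z) - \<phi> (nsmul n z) + \<phi> 0"
    using Suc by simp
  have e: "nsmul n z + z = nsmul (Suc n) z" by (simp add: nsmul_Suc add.commute)
  have st: "c (nsmul n z, z) = \<phi> z - \<phi> (nsmul (Suc n) z) + \<phi> (nsmul n z)"
    using Suc.prems[of n] e by simp
  have "(\<Sum>i<Suc n. c (nsmul i z, z)) = (\<Sum>i<n. c (nsmul i z, z)) + c (nsmul n z, z)" by simp
  also have "\<dots> = (nsmul n (\<phi> z) - \<phi> (nsmul n z) + \<phi> 0) + (\<phi> z - \<phi> (nsmul (Suc n) z) + \<phi> (nsmul n z))"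
    by (simp only: IH st)
  also have "\<dots> = nsmul (Suc n) (\<phi> z) - \<phi> (nsmul (Suc n) z) + \<phi> 0"
    by (simp add: nsmul_Suc algebra_simps)
  finally show ?case .
qed

definition ordk :: "nat \<Rightarrow> 'c::ab_group_add \<Rightarrow> nat" where
  "ordk p z = (LEAST k. nsmul (p ^ k) z = 0)"

lemma ordk: "z \<in> primary C p \<Longrightarrow> nsmul (p ^ ordk p z) z = 0"
  unfolding ordk_def primary_def by (auto intro: LeastI)

lemma ordk_0: "ordk p 0 = 0"
  unfolding ordk_def by (rule Least_eq_0) simp

definition sig :: "('c::ab_group_add \<times> 'c \<Rightarrow> 'a::ab_group_add) \<Rightarrow> nat \<Rightarrow> 'c \<Rightarrow> 'a" where
  "sig c p z = (\<Sum>i<p ^ ordk p z. c (nsmul i z, z))"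

definition phic :: "'a::ab_group_add set \<Rightarrow> ('c::ab_group_add \<times> 'c \<Rightarrow> 'a) \<Rightarrow> nat \<Rightarrow> 'c \<Rightarrow> 'a" where
  "phic A c p z = (SOME a. a \<in> A \<and> nsmul (p ^ ordk p z) a = sig c p z)"

definition fp :: "'c::ab_group_add set \<Rightarrow> 'a::ab_group_add set \<Rightarrow> ('c \<times> 'c \<Rightarrow> 'a) \<Rightarrow> nat \<Rightarrow> ('c \<times> 'c \<Rightarrow> 'a)" where
  "fp C A c p = (\<lambda>(x, y)\<in>primary C p \<times> primary C p. c (x, y) - (phic A c p y - phic A c p (x + y) + phic A c p x))"

definition FF :: "'c::ab_group_add set \<Rightarrow> 'a::ab_group_add set \<Rightarrow> ('c \<times> 'c \<Rightarrow> 'a) \<Rightarrow> (nat \<Rightarrow> 'c \<times> 'c \<Rightarrow> 'a)" where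
  "FF C A c = (\<lambda>p\<in>primes_set. fp C A c p)"

lemma phic_witness:
  assumes "a \<in> A" "nsmul (p ^ ordk p z) a = sig c p z"
  shows "phic A c p z \<in> A \<and> nsmul (p ^ ordk p z) (phic A c p z) = sig c p z"
  unfolding phic_def by (rule someI[of _ a]) (use assms in blast)

lemma sig_cobd:
  assumes "\<And>i. nsmul i z \<in> S" "z \<in> S" "\<forall>x\<in>S. \<forall>y\<in>S. c (x, y) = \<phi> y - \<phi> (x + y) + \<phi> x"
    "c (0, 0) = 0" "nsmul (p ^ ordk p z) z = 0"
  shows "sig c p z = nsmul (p ^ ordk p z) (\<phi> z)"
proof -
  have "0 \<in> S" using assms(1)[of 0] by simp
  then have "\<phi> 0 = 0" using assms(3,4) by force
  moreover have "(\<Sum>i<p ^ ordk p z. c (nsmul i z, z)) = nsmul (p ^ ordk p z) (\<phi> z) - \<phi> (nsmul (p ^ ordk p z) z) + \<phi> 0"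
    by (rule telescope) (use assms in auto)
  ultimately show ?thesis unfolding sig_def using assms(5) by simp
qed


locale setting = tors C for C :: "'c::ab_group_add set" +
  fixes A :: "'a::ab_group_add set"
  assumes sgA: "subgrp A"
begin

lemma sgCp: "subgrp (primary C p)" using primary_subgrp[OF sg] .
lemma sgAp: "subgrp (primary A p)" using primary_subgrp[OF sgA] .

lemma Cp_C: "x \<in> primary C p \<Longrightarrow> x \<in> C" using primary_sub by blast
lemma Ap_A: "x \<in> primary A p \<Longrightarrow> x \<in> A" using primary_sub by blast

lemma bw_z: "c \<in> bwcoc C A \<Longrightarrow> c \<in> zcoc C A" unfolding bwcoc_def by blast

lemma bw_cobd: "c \<in> bwcoc C A \<Longrightarrow> finite S \<Longrightarrow> subgrp S \<Longrightarrow> S \<subseteq> C \<Longrightarrow>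
   \<exists>\<phi>. (\<forall>x\<in>S. \<phi> x \<in> A) \<and> (\<forall>x\<in>S. \<forall>y\<in>S. c (x, y) = \<phi> y - \<phi> (x + y) + \<phi> x)"
  unfolding bwcoc_def is_cobd_on_def by blast

lemma phi_spec:
  assumes "c \<in> bwcoc C A" "prime p" "z \<in> primary C p"
  shows "phic A c p z \<in> A \<and> nsmul (p ^ ordk p z) (phic A c p z) = sig c p z"
proof -
  have zC: "z \<in> C" using assms(3) Cp_C by blast
  have n: "nsmul (p ^ ordk p z) z = 0" using ordk[OF assms(3)] .
  have n0: "p ^ ordk p z > 0" using prime_gt_0_nat[OF assms(2)] by simp
  obtain \<phi> where \<phi>: "\<forall>x\<in>cyc z. \<phi> x \<in> A" "\<forall>x\<in>cyc z. \<forall>y\<in>cyc z. c (x, y) = \<phi> y - \<phi> (x + y) + \<phi> x"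
    using bw_cobd[OF assms(1) cyc_finite[OF n n0] cyc_subgrp[OF n n0] cyc_sub[OF sg zC]] by blast
  have "sig c p z = nsmul (p ^ ordk p z) (\<phi> z)"
    by (rule sig_cobd[OF _ cyc_self \<phi>(2) zcoc_00[OF sg bw_z[OF assms(1)]] n]) (auto simp: cyc_def)
  then show ?thesis using phic_witness[of "\<phi> z" A p z c] \<phi>(1) cyc_self by auto
qed

lemma phic_0:
  assumes "c \<in> zcoc C A"
  shows "phic A c p 0 = 0"
proof -
  have "sig c p 0 = 0" unfolding sig_def ordk_0 using zcoc_00[OF sg assms] by simp
  then show ?thesis unfolding phic_def ordk_0 using subgrp_0[OF sgA] by (auto intro: some_equality)
qed

lemma fp_app: "x \<in> primary C p \<Longrightarrow> y \<in> primary C p \<Longrightarrow>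
  fp C A c p (x, y) = c (x, y) - (phic A c p y - phic A c p (x + y) + phic A c p x)"
  unfolding fp_def by simp

lemma fp_local:
  assumes "c \<in> bwcoc C A" "prime p" "finite S" "subgrp S" "S \<subseteq> primary C p"
  shows "\<exists>\<psi>. (\<forall>z\<in>S. \<psi> z \<in> primary A p) \<and> (\<forall>x\<in>S. \<forall>y\<in>S. fp C A c p (x, y) = \<psi> y - \<psi> (x + y) + \<psi> x)"
proof -
  have SC: "S \<subseteq> C" using assms(5) primary_sub by blast
  obtain \<phi> where \<phi>: "\<forall>x\<in>S. \<phi> x \<in> A" "\<forall>x\<in>S. \<forall>y\<in>S. c (x, y) = \<phi> y - \<phi> (x + y) + \<phi> x"
    using bw_cobd[OF assms(1,3,4) SC] by blast
  define \<psi> where "\<psi> z = \<phi> z - phic A c p z" for z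
  have "\<psi> z \<in> primary A p" if z: "z \<in> S" for z
  proof -
    have zp: "z \<in> primary C p" using z assms(5) by blast
    have ph: "phic A c p z \<in> A \<and> nsmul (p ^ ordk p z) (phic A c p z) = sig c p z"
      using phi_spec[OF assms(1,2) zp] .
    have "sig c p z = nsmul (p ^ ordk p z) (\<phi> z)"
      by (rule sig_cobd[OF _ z \<phi>(2) zcoc_00[OF sg bw_z[OF assms(1)]] ordk[OF zp]])
        (use subgrp_nsmul[OF assms(4) z] in auto)
    then have "nsmul (p ^ ordk p z) (\<psi> z) = 0" using ph by (simp add: \<psi>_def nsmul_diff)
    moreover have "\<psi> z \<in> A" using ph \<phi>(1) z sgA subgrp_diff unfolding \<psi>_def by blast
    ultimately show ?thesis by (rule primaryI[rotated])
  qed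
  moreover have "fp C A c p (x, y) = \<psi> y - \<psi> (x + y) + \<psi> x" if "x \<in> S" "y \<in> S" for x y
  proof -
    have "x + y \<in> S" using that subgrp_add assms(4) by blast
    then show ?thesis using that assms(5) \<phi>(2)
      by (subst fp_app) (auto simp: \<psi>_def algebra_simps)
  qed
  ultimately show ?thesis by blast
qed

lemma fp_val:
  assumes "c \<in> bwcoc C A" "prime p" "x \<in> primary C p" "y \<in> primary C p"
  shows "fp C A c p (x, y) \<in> primary A p"
proof -
  obtain n m where nm: "nsmul n x = 0" "n > 0" "nsmul m y = 0" "m > 0"
    using primary_tors assms(2-4) by metis
  obtain S where S: "finite S" "subgrp S" "S \<subseteq> primary C p" "x \<in> S" "y \<in> S"
    using fin_subgrp2[OF sgCp assms(3,4) nm] by blast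
  obtain \<psi> where \<psi>: "\<forall>z\<in>S. \<psi> z \<in> primary A p" "\<forall>x\<in>S. \<forall>y\<in>S. fp C A c p (x, y) = \<psi> y - \<psi> (x + y) + \<psi> x"
    using fp_local[OF assms(1,2) S(1-3)] by blast
  have "x + y \<in> S" using S subgrp_add by blast
  then show ?thesis using \<psi> S sgAp by (simp add: subgrp_add subgrp_diff)
qed

lemma fp_zcoc:
  assumes "c \<in> bwcoc C A" "prime p"
  shows "fp C A c p \<in> zcoc (primary C p) (primary A p)"
proof (rule zcocI)
  show "fp C A c p (x, y) \<in> primary A p" if "x \<in> primary C p" "y \<in> primary C p" for x y
    using fp_val[OF assms that] .
  show "fp C A c p z = undefined" if "z \<notin> primary C p \<times> primary C p" for z
    using that unfolding fp_def by auto
  show "fp C A c p (x, 0) = 0" if "x \<in> primary C p" for x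
    using that subgrp_0[OF sgCp] zcoc_D(2)[OF bw_z[OF assms(1)]] Cp_C phic_0[OF bw_z[OF assms(1)]]
    by (simp add: fp_app)
  show "fp C A c p (x, y) = fp C A c p (y, x)" if "x \<in> primary C p" "y \<in> primary C p" for x y
    using that zcoc_D(3)[OF bw_z[OF assms(1)]] Cp_C by (simp add: fp_app add.commute)
  fix x y z assume xyz: "x \<in> primary C p" "y \<in> primary C p" "z \<in> primary C p"
  have s: "x + y \<in> primary C p" "y + z \<in> primary C p" using xyz sgCp subgrp_add by blast+
  have "fp C A c p (y, z) - fp C A c p (x + y, z) + fp C A c p (x, y + z) - fp C A c p (x, y)
    = c (y, z) - c (x + y, z) + c (x, y + z) - c (x, y)"
    using xyz s by (simp add: fp_app algebra_simps)
  also have "\<dots> = 0" using zcoc_D(4)[OF bw_z[OF assms(1)]] xyz Cp_C by blast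
  finally show "fp C A c p (y, z) - fp C A c p (x + y, z) + fp C A c p (x, y + z) - fp C A c p (x, y) = 0" .
qed

lemma fp_bwcoc:
  assumes "c \<in> bwcoc C A" "prime p"
  shows "fp C A c p \<in> bwcoc (primary C p) (primary A p)"
  unfolding bwcoc_def is_cobd_on_def
  using fp_zcoc[OF assms] fp_local[OF assms] by blast

lemma FF_in: "c \<in> bwcoc C A \<Longrightarrow> FF C A c \<in> prod_bw C A"
  unfolding prod_bw_def FF_def primes_set_def using fp_bwcoc by auto


lemma sig_cadd:
  assumes "z \<in> C"
  shows "sig (cadd C c d) p z = sig c p z + sig d p z"
  unfolding sig_def cadd_def using assms subgrp_nsmul[OF sg assms]
  by (simp add: sum.distrib)

lemma sig_csub:
  assumes "z \<in> C"
  shows "sig (csub C c d) p z = sig c p z - sig d p z"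
  unfolding sig_def csub_def using assms subgrp_nsmul[OF sg assms]
  by (simp add: sum_subtractf)

lemma hom_part:
  assumes "c \<in> bwcoc C A" "d \<in> bwcoc C A" "prime p"
  shows "csub (primary C p) (fp C A (cadd C c d) p) (cadd (primary C p) (fp C A c p) (fp C A d p))
          \<in> bcoc (primary C p) (primary A p)"
proof -
  have cd: "cadd C c d \<in> bwcoc C A" using bwcoc_cadd[OF sg sgA assms(1,2)] .
  have z: "csub (primary C p) (fp C A (cadd C c d) p) (cadd (primary C p) (fp C A c p) (fp C A d p))
          \<in> zcoc (primary C p) (primary A p)"
    using zcoc_csub[OF sgCp sgAp fp_zcoc[OF cd assms(3)] zcoc_cadd[OF sgCp sgAp fp_zcoc[OF assms(1,3)] fp_zcoc[OF assms(2,3)]]] .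
  define \<psi> where "\<psi> z = - (phic A (cadd C c d) p z - phic A c p z - phic A d p z)" for z
  have "\<psi> z \<in> primary A p" if zp: "z \<in> primary C p" for z
  proof -
    note s1 = phi_spec[OF cd assms(3) zp] and s2 = phi_spec[OF assms(1,3) zp] and s3 = phi_spec[OF assms(2,3) zp]
    have "nsmul (p ^ ordk p z) (\<psi> z) = 0"
      using s1 s2 s3 by (simp add: \<psi>_def nsmul_uminus nsmul_diff sig_cadd[OF Cp_C[OF zp], of c d p])
    moreover have "\<psi> z \<in> A" using s1 s2 s3 sgA unfolding \<psi>_def by (simp add: subgrp_diff subgrp_uminus)
    ultimately show ?thesis by (rule primaryI[rotated])
  qed
  moreover have "csub (primary C p) (fp C A (cadd C c d) p) (cadd (primary C p) (fp C A c p) (fp C A d p)) (x, y)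
     = \<psi> y - \<psi> (x + y) + \<psi> x" if "x \<in> primary C p" "y \<in> primary C p" for x y
  proof -
    have "x + y \<in> primary C p" using that sgCp subgrp_add by blast
    then show ?thesis using that Cp_C
      by (simp add: csub_def cadd_def fp_app \<psi>_def algebra_simps)
  qed
  ultimately show ?thesis using z unfolding bcoc_def is_cobd_on_def by blast
qed

lemma FF_hom:
  assumes "c \<in> bwcoc C A" "d \<in> bwcoc C A"
  shows "psub C (FF C A (cadd C c d)) (padd C (FF C A c) (FF C A d)) \<in> prod_b C A"
  unfolding prod_b_def psub_def padd_def FF_def
  using hom_part[OF assms] by (auto simp: primes_set_def)

lemma inj_fwd_part:
  assumes "c \<in> bwcoc C A" "d \<in> bwcoc C A" "prime p" "csub C c d \<in> bcoc C A"
  shows "csub (primary C p) (fp C A c p) (fp C A d p) \<in> bcoc (primary C p) (primary A p)"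
proof -
  have z: "csub (primary C p) (fp C A c p) (fp C A d p) \<in> zcoc (primary C p) (primary A p)"
    using zcoc_csub[OF sgCp sgAp fp_zcoc[OF assms(1,3)] fp_zcoc[OF assms(2,3)]] .
  obtain \<theta> where \<theta>: "\<forall>x\<in>C. \<theta> x \<in> A" "\<forall>x\<in>C. \<forall>y\<in>C. csub C c d (x, y) = \<theta> y - \<theta> (x + y) + \<theta> x"
    using assms(4) unfolding bcoc_def is_cobd_on_def by blast
  have e0: "csub C c d (0, 0) = 0" using zcoc_00[OF sg] assms(4) unfolding bcoc_def by blast
  define \<psi> where "\<psi> z = \<theta> z - phic A c p z + phic A d p z" for z
  have "\<psi> z \<in> primary A p" if zp: "z \<in> primary C p" for z
  proof -
    note s2 = phi_spec[OF assms(1,3) zp] and s3 = phi_spec[OF assms(2,3) zp]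
    have zC: "z \<in> C" using Cp_C[OF zp] .
    have "sig (csub C c d) p z = nsmul (p ^ ordk p z) (\<theta> z)"
      by (rule sig_cobd[OF _ zC \<theta>(2) e0 ordk[OF zp]]) (use subgrp_nsmul[OF sg zC] in auto)
    then have th: "nsmul (p ^ ordk p z) (\<theta> z) = sig c p z - sig d p z"
      by (simp add: sig_csub[OF zC, of c d p])
    have "nsmul (p ^ ordk p z) (\<psi> z) = 0"
      using s2 s3 th by (simp add: \<psi>_def nsmul_plus nsmul_diff)
    moreover have "\<psi> z \<in> A" using s2 s3 sgA \<theta>(1) zC unfolding \<psi>_def by (simp add: subgrp_diff subgrp_add)
    ultimately show ?thesis by (rule primaryI[rotated])
  qed
  moreover have "csub (primary C p) (fp C A c p) (fp C A d p) (x, y) = \<psi> y - \<psi> (x + y) + \<psi> x"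
    if "x \<in> primary C p" "y \<in> primary C p" for x y
  proof -
    have "x + y \<in> primary C p" using that sgCp subgrp_add by blast
    moreover have "c (x, y) - d (x, y) = \<theta> y - \<theta> (x + y) + \<theta> x"
      using \<theta>(2) that Cp_C by (auto simp: csub_def)
    ultimately show ?thesis using that
      by (simp add: csub_def fp_app \<psi>_def algebra_simps)
  qed
  ultimately show ?thesis using z unfolding bcoc_def is_cobd_on_def by blast
qed

lemma FF_inj_fwd:
  assumes "c \<in> bwcoc C A" "d \<in> bwcoc C A" "csub C c d \<in> bcoc C A"
  shows "psub C (FF C A c) (FF C A d) \<in> prod_b C A"
  unfolding prod_b_def psub_def FF_def
  using inj_fwd_part[OF assms(1,2) _ assms(3)] by (auto simp: primes_set_def)

end


lemma four_term:
  assumes "subgrp C" "e \<in> zcoc C A" "a \<in> C" "b \<in> C" "u \<in> C" "v \<in> C"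
  shows "e (a + u, b + v) = e (a, b) + e (u, v) + e (a + b, u + v) - e (a, u) - e (b, v)"
proof -
  note coc = zcoc_D(4)[OF assms(2)]
  have m: "a + u \<in> C" "a + b \<in> C" using assms subgrp_add by blast+
  have r1: "a + u + b = a + b + u" by (simp add: add_ac)
  have r2: "u + b = b + u" by (simp add: add_ac)
  have I1: "e (b, v) - e (a + b + u, v) + e (a + u, b + v) - e (a + u, b) = 0"
    using coc[OF m(1) assms(4,6)] r1 by simp
  have I2: "e (u, v) - e (a + b + u, v) + e (a + b, u + v) - e (a + b, u) = 0"
    using coc[OF m(2) assms(5,6)] by simp
  have I3: "e (b, u) - e (a + u, b) + e (a, b + u) - e (a, u) = 0"
    using coc[OF assms(3,5,4)] r2 zcoc_D(3)[OF assms(2) assms(5,4)] by simp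
  have I4: "e (b, u) - e (a + b, u) + e (a, b + u) - e (a, b) = 0"
    using coc[OF assms(3,4,5)] by simp
  have "e (a + u, b + v) - (e (a, b) + e (u, v) + e (a + b, u + v) - e (a, u) - e (b, v))
     = (e (b, v) - e (a + b + u, v) + e (a + u, b + v) - e (a + u, b))
     - (e (u, v) - e (a + b + u, v) + e (a + b, u + v) - e (a + b, u))
     - (e (b, u) - e (a + u, b) + e (a, b + u) - e (a, u))
     + (e (b, u) - e (a + b, u) + e (a, b + u) - e (a, b))"
    by (simp add: algebra_simps)
  also have "\<dots> = 0" by (simp only: I1 I2 I3 I4) simp
  finally show ?thesis by simp
qed

primrec psiN :: "'c::ab_group_add set \<Rightarrow> ('c \<times> 'c \<Rightarrow> 'a::ab_group_add) \<Rightarrow> (nat \<Rightarrow> 'c \<Rightarrow> 'a) \<Rightarrow> nat \<Rightarrow> 'c \<Rightarrow> 'a" where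
  "psiN C e X 0 x = 0"
| "psiN C e X (Suc N) x = psiN C e X N x +
     (if prime (Suc N) then X (Suc N) (pcomp C (Suc N) x)
        - e ((\<Sum>q\<in>{q. prime q \<and> q \<le> N}. pcomp C q x), pcomp C (Suc N) x) else 0)"

declare psiN.simps(2)[simp del]

context tors
begin

lemma Qs_finite: "finite {q::nat. prime q \<and> q \<le> N}" by simp

lemma Qs_Suc: "prime (Suc N) \<Longrightarrow> {q. prime q \<and> q \<le> Suc N} = insert (Suc N) {q. prime q \<and> q \<le> N}"
  by auto

lemma Qs_Suc': "\<not> prime (Suc N) \<Longrightarrow> {q. prime q \<and> q \<le> Suc N} = {q. prime q \<and> q \<le> N}"
  using le_Suc_eq by auto

lemma sum_stab:
  fixes M N :: nat
  assumes "\<And>p. prime p \<Longrightarrow> M < p \<Longrightarrow> G p = 0" "M \<le> N"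
  shows "(\<Sum>p\<in>{q. prime q \<and> q \<le> N}. G p) = (\<Sum>p\<in>{q. prime q \<and> q \<le> M}. G p)"
proof (rule sum.mono_neutral_right)
  show "finite {q. prime q \<and> q \<le> N}" by (rule Qs_finite)
  show "{q. prime q \<and> q \<le> M} \<subseteq> {q. prime q \<and> q \<le> N}" using assms(2) by auto
  show "\<forall>i\<in>{q. prime q \<and> q \<le> N} - {q. prime q \<and> q \<le> M}. G i = 0"
    using assms(1) not_le by blast
qed

lemma sum_stab2:
  fixes M N1 N2 :: nat
  assumes "\<And>p. prime p \<Longrightarrow> M < p \<Longrightarrow> G p = 0" "M \<le> N1" "M \<le> N2"
  shows "(\<Sum>p\<in>{q. prime q \<and> q \<le> N1}. G p) = (\<Sum>p\<in>{q. prime q \<and> q \<le> N2}. G p)"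
  using sum_stab[OF assms(1,2)] sum_stab[OF assms(1,3)] by simp

lemma lo_in: "x \<in> C \<Longrightarrow> lo N x \<in> C"
  unfolding lo_def by (rule subgrp_sum[OF sg]) (auto intro: pcomp_in)

lemma lo_add: "x \<in> C \<Longrightarrow> y \<in> C \<Longrightarrow> lo N (x + y) = lo N x + lo N y"
  unfolding lo_def by (simp add: pcomp_add sum.distrib)

lemma lo_Suc: "prime (Suc N) \<Longrightarrow> lo (Suc N) x = lo N x + pcomp C (Suc N) x"
  unfolding lo_def by (simp add: Qs_Suc add.commute)

lemma lo_Suc': "\<not> prime (Suc N) \<Longrightarrow> lo (Suc N) x = lo N x"
  unfolding lo_def by (simp add: Qs_Suc')

lemma lo_0: "lo 0 x = 0"
proof -
  have "{q::nat. prime q \<and> q \<le> 0} = {}" by auto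
  then show ?thesis unfolding lo_def by (simp only: sum.empty)
qed

lemma psiN_Suc: "psiN C e X (Suc N) x = psiN C e X N x +
     (if prime (Suc N) then X (Suc N) (pcomp C (Suc N) x) - e (lo N x, pcomp C (Suc N) x) else 0)"
  by (simp add: lo_def psiN.simps(2))

lemma glue:
  fixes A :: "'a::ab_group_add set"
  assumes sgA: "subgrp A" and e: "e \<in> zcoc C A"
    and X: "\<And>p. prime p \<Longrightarrow> (\<forall>z\<in>primary C p. X p z \<in> A) \<and>
               (\<forall>x\<in>primary C p. \<forall>y\<in>primary C p. e (x, y) = X p y - X p (x + y) + X p x)"
  shows "is_cobd_on C A e"
proof -
  have X0: "X p 0 = 0" if "prime p" for p
  proof -
    have "0 \<in> primary C p" using subgrp_0[OF primary_subgrp[OF sg]] .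
    then have "e (0, 0) = X p 0 - X p (0 + 0) + X p 0" using X[OF that] by blast
    then show ?thesis using zcoc_00[OF sg e] by simp
  qed
  have pC: "pcomp C p x \<in> primary C p" if "x \<in> C" "prime p" for x p using pcomp_primary that .
  have main: "e (lo N x, lo N y) = psiN C e X N y - psiN C e X N (x + y) + psiN C e X N x"
    if "x \<in> C" "y \<in> C" for N x y
    using that
  proof (induction N)
    case 0 then show ?case using zcoc_00[OF sg e] by (simp add: lo_0)
  next
    case (Suc N)
    show ?case
    proof (cases "prime (Suc N)")
      case False then show ?thesis using Suc by (simp add: lo_Suc' psiN_Suc)
    next
      case True
      define p where "p = Suc N"
      have pp: "prime p" using True p_def by simp
      define a b u v where "a = lo N x" and "b = lo N y" and "u = pcomp C p x" and "v = pcomp C p y"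
      have mem: "a \<in> C" "b \<in> C" "u \<in> C" "v \<in> C"
        unfolding a_def b_def u_def v_def using lo_in pcomp_in pp Suc.prems by auto
      have up: "u \<in> primary C p" "v \<in> primary C p" unfolding u_def v_def using pC pp Suc.prems by auto
      have uv: "pcomp C p (x + y) = u + v" unfolding u_def v_def using pcomp_add pp Suc.prems by auto
      have ab: "lo N (x + y) = a + b" unfolding a_def b_def using lo_add Suc.prems by auto
      have IH: "e (a, b) = psiN C e X N y - psiN C e X N (x + y) + psiN C e X N x"
        unfolding a_def b_def using Suc by simp
      have Xuv: "e (u, v) = X p v - X p (u + v) + X p u" using X[OF pp] up by blast
      have "e (lo (Suc N) x, lo (Suc N) y) = e (a + u, b + v)"
        unfolding a_def b_def u_def v_def p_def using True by (simp add: lo_Suc)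
      also have "\<dots> = e (a, b) + e (u, v) + e (a + b, u + v) - e (a, u) - e (b, v)"
        using four_term[OF sg e mem(1,2,3,4)] .
      also have "\<dots> = (psiN C e X N y + (X p v - e (b, v)))
          - (psiN C e X N (x + y) + (X p (u + v) - e (a + b, u + v)))
          + (psiN C e X N x + (X p u - e (a, u)))"
        by (simp only: IH Xuv) (simp add: algebra_simps)
      also have "\<dots> = psiN C e X (Suc N) y - psiN C e X (Suc N) (x + y) + psiN C e X (Suc N) x"
        unfolding psiN_Suc using True ab uv by (simp add: a_def b_def u_def v_def p_def)
      finally show ?thesis .
    qed
  qed
  have stab: "psiN C e X N x = psiN C e X (bd x) x" if "x \<in> C" "bd x \<le> N" for N x
    using that(2)
  proof (induction N rule: dec_induct)
    case base then show ?case by simp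
  next
    case (step N)
    have "prime (Suc N) \<Longrightarrow> pcomp C (Suc N) x = 0" using pcomp_big[OF that(1)] step by simp
    then show ?case using step X0 zcoc_D(2)[OF e lo_in[OF that(1)]] by (simp add: psiN_Suc)
  qed
  have inA: "psiN C e X N x \<in> A" if "x \<in> C" for N x
  proof (induction N)
    case 0 then show ?case using subgrp_0[OF sgA] by simp
  next
    case (Suc N)
    have "prime (Suc N) \<Longrightarrow> X (Suc N) (pcomp C (Suc N) x) \<in> A" using X pC[OF that] by blast
    moreover have "prime (Suc N) \<Longrightarrow> e (lo N x, pcomp C (Suc N) x) \<in> A"
      using zcoc_val[OF e lo_in[OF that] pcomp_in[OF that]] by blast
    ultimately show ?case using Suc sgA subgrp_0[OF sgA]
      by (simp add: psiN_Suc subgrp_add subgrp_diff)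
  qed
  show ?thesis unfolding is_cobd_on_def
  proof (intro exI[of _ "\<lambda>x. psiN C e X (bd x) x"] conjI ballI)
    fix x assume "x \<in> C" then show "psiN C e X (bd x) x \<in> A" using inA by blast
  next
    fix x y assume xy: "x \<in> C" "y \<in> C"
    have xy': "x + y \<in> C" using xy sg subgrp_add by blast
    define N where "N = bd x + bd y + bd (x + y)"
    have "e (x, y) = e (lo N x, lo N y)" using decomp_bd xy N_def by simp
    also have "\<dots> = psiN C e X N y - psiN C e X N (x + y) + psiN C e X N x" using main xy by blast
    also have "\<dots> = psiN C e X (bd y) y - psiN C e X (bd (x + y)) (x + y) + psiN C e X (bd x) x"
      using stab[OF xy(1), of N] stab[OF xy(2), of N] stab[OF xy', of N] N_def by simp
    finally show "e (x, y) = psiN C e X (bd y) y - psiN C e X (bd (x + y)) (x + y) + psiN C e X (bd x) x" .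
  qed
qed

end


context setting
begin

lemma psub_app: "p \<in> primes_set \<Longrightarrow> psub C F G p = csub (primary C p) (F p) (G p)"
  unfolding psub_def by simp

lemma FF_app: "p \<in> primes_set \<Longrightarrow> FF C A c p = fp C A c p"
  unfolding FF_def by simp

lemma FF_inj_bwd:
  assumes c: "c \<in> bwcoc C A" and d: "d \<in> bwcoc C A" and h: "psub C (FF C A c) (FF C A d) \<in> prod_b C A"
  shows "csub C c d \<in> bcoc C A"
proof -
  have ez: "csub C c d \<in> zcoc C A" using zcoc_csub[OF sg sgA bw_z[OF c] bw_z[OF d]] .
  have hp: "csub (primary C p) (fp C A c p) (fp C A d p) \<in> bcoc (primary C p) (primary A p)"
    if "prime p" for p
  proof -
    have "p \<in> primes_set" using that by (simp add: primes_set_def)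
    then have "psub C (FF C A c) (FF C A d) p \<in> bcoc (primary C p) (primary A p)"
      using PiE_mem[OF h[unfolded prod_b_def]] by blast
    then show ?thesis using \<open>p \<in> primes_set\<close> by (simp add: psub_app FF_app)
  qed
  define \<Psi> where "\<Psi> p = (SOME \<psi>. (\<forall>z\<in>primary C p. \<psi> z \<in> primary A p) \<and>
      (\<forall>x\<in>primary C p. \<forall>y\<in>primary C p. csub (primary C p) (fp C A c p) (fp C A d p) (x, y) = \<psi> y - \<psi> (x + y) + \<psi> x))" for p
  have \<Psi>: "(\<forall>z\<in>primary C p. \<Psi> p z \<in> primary A p) \<and>
      (\<forall>x\<in>primary C p. \<forall>y\<in>primary C p. csub (primary C p) (fp C A c p) (fp C A d p) (x, y) = \<Psi> p y - \<Psi> p (x + y) + \<Psi> p x)"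
    if pp: "prime p" for p
  proof -
    have ex: "\<exists>\<psi>. (\<forall>z\<in>primary C p. \<psi> z \<in> primary A p) \<and>
      (\<forall>x\<in>primary C p. \<forall>y\<in>primary C p. csub (primary C p) (fp C A c p) (fp C A d p) (x, y) = \<psi> y - \<psi> (x + y) + \<psi> x)"
      using hp[OF pp] unfolding bcoc_def is_cobd_on_def by blast
    show ?thesis unfolding \<Psi>_def by (rule someI_ex[OF ex])
  qed
  define X where "X p z = \<Psi> p z + phic A c p z - phic A d p z" for p z
  have "is_cobd_on C A (csub C c d)"
  proof (rule glue[OF sgA ez])
    fix p :: nat assume pp: "prime p"
    show "(\<forall>z\<in>primary C p. X p z \<in> A) \<and>
          (\<forall>x\<in>primary C p. \<forall>y\<in>primary C p. csub C c d (x, y) = X p y - X p (x + y) + X p x)"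
    proof (intro conjI ballI)
      fix z assume z: "z \<in> primary C p"
      have "\<Psi> p z \<in> A" using \<Psi>[OF pp] z Ap_A by blast
      then show "X p z \<in> A" unfolding X_def
        using phi_spec[OF c pp z] phi_spec[OF d pp z] subgrp_add[OF sgA] subgrp_diff[OF sgA]
        by blast
    next
      fix x y assume xy: "x \<in> primary C p" "y \<in> primary C p"
      have s: "x + y \<in> primary C p" using xy sgCp subgrp_add by blast
      have "csub (primary C p) (fp C A c p) (fp C A d p) (x, y) = \<Psi> p y - \<Psi> p (x + y) + \<Psi> p x"
        using \<Psi>[OF pp] xy by blast
      then show "csub C c d (x, y) = X p y - X p (x + y) + X p x"
        using xy s Cp_C by (simp add: csub_def fp_app X_def algebra_simps)
    qed
  qed
  then show ?thesis using ez unfolding bcoc_def by blast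
qed

lemma pcomp_img_subgrp:
  assumes "subgrp S" "S \<subseteq> C" "prime p"
  shows "subgrp (pcomp C p ` S)"
  unfolding subgrp_def
proof (intro conjI ballI)
  show "0 \<in> pcomp C p ` S" using subgrp_0[OF assms(1)] pcomp_0 by (metis image_eqI)
next
  fix a b assume "a \<in> pcomp C p ` S" "b \<in> pcomp C p ` S"
  then obtain x y where "a = pcomp C p x" "b = pcomp C p y" "x \<in> S" "y \<in> S" by auto
  then show "a + b \<in> pcomp C p ` S"
    using pcomp_add[of x y p] assms subgrp_add[OF assms(1)] by (metis image_eqI subsetD)
next
  fix a assume "a \<in> pcomp C p ` S"
  then obtain x where "a = pcomp C p x" "x \<in> S" by auto
  then show "- a \<in> pcomp C p ` S"
    using pcomp_uminus[of x p] assms subgrp_uminus[OF assms(1)] by (metis image_eqI subsetD)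
qed

lemma surj_part:
  assumes F: "F \<in> prod_bw C A"
  shows "\<exists>c\<in>bwcoc C A. psub C F (FF C A c) \<in> prod_b C A"
proof -
  have Fp: "F p \<in> bwcoc (primary C p) (primary A p)" if "prime p" for p
    using F that unfolding prod_bw_def primes_set_def by auto
  have Fz: "F p \<in> zcoc (primary C p) (primary A p)" if "prime p" for p
    using Fp[OF that] unfolding bwcoc_def by blast
  have F00: "F p (0, 0) = 0" if "prime p" for p using zcoc_00[OF sgCp Fz[OF that]] .
  have Fv: "F p (a, b) \<in> primary A p" if "prime p" "a \<in> primary C p" "b \<in> primary C p" for p a b
    using zcoc_val[OF Fz[OF that(1)] that(2,3)] .
  have vanish: "F p (pcomp C p x, pcomp C p y) = 0"
    if "x \<in> C" "y \<in> C" "prime p" "max (bd x) (bd y) < p" for x y p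
    using pcomp_big[of x p] pcomp_big[of y p] that F00 by simp
  define c where "c = (\<lambda>(x, y)\<in>C \<times> C. \<Sum>p\<in>{q. prime q \<and> q \<le> bd x + bd y}. F p (pcomp C p x, pcomp C p y))"
  have ceq: "c (x, y) = (\<Sum>p\<in>{q. prime q \<and> q \<le> N}. F p (pcomp C p x, pcomp C p y))"
    if "x \<in> C" "y \<in> C" "bd x \<le> N" "bd y \<le> N" for x y N
  proof -
    have "c (x, y) = (\<Sum>p\<in>{q. prime q \<and> q \<le> bd x + bd y}. F p (pcomp C p x, pcomp C p y))"
      unfolding c_def using that by simp
    also have "\<dots> = (\<Sum>p\<in>{q. prime q \<and> q \<le> N}. F p (pcomp C p x, pcomp C p y))"
      by (rule sum_stab2[of "max (bd x) (bd y)"]) (use vanish that in auto)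
    finally show ?thesis .
  qed
  have cz: "c \<in> zcoc C A"
  proof (rule zcocI)
    fix x y assume xy: "x \<in> C" "y \<in> C"
    show "c (x, y) \<in> A" unfolding c_def using xy
      by (simp, intro subgrp_sum[OF sgA]) (use Fv pcomp_primary Ap_A in blast)
    show "c (x, y) = c (y, x)" unfolding c_def using xy zcoc_D(3)[OF Fz] pcomp_primary
      by (simp add: add.commute)
  next
    fix z assume "z \<notin> C \<times> C" then show "c z = undefined" unfolding c_def by auto
  next
    fix x assume x: "x \<in> C"
    show "c (x, 0) = 0" unfolding c_def using x subgrp_0[OF sg] pcomp_0 zcoc_D(2)[OF Fz] pcomp_primary
      by simp
  next
    fix x y z assume xyz: "x \<in> C" "y \<in> C" "z \<in> C"
    have s: "x + y \<in> C" "y + z \<in> C" using xyz sg subgrp_add by blast+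
    define N where "N = bd x + bd y + bd z + bd (x + y) + bd (y + z)"
    have "c (y, z) - c (x + y, z) + c (x, y + z) - c (x, y)
      = (\<Sum>p\<in>{q. prime q \<and> q \<le> N}. F p (pcomp C p y, pcomp C p z) - F p (pcomp C p (x + y), pcomp C p z)
          + F p (pcomp C p x, pcomp C p (y + z)) - F p (pcomp C p x, pcomp C p y))"
      using ceq[of y z N] ceq[of "x + y" z N] ceq[of x "y + z" N] ceq[of x y N] xyz s N_def
      by (simp add: sum_subtractf sum.distrib)
    also have "\<dots> = 0"
    proof (rule sum.neutral, intro ballI)
      fix p assume "p \<in> {q. prime q \<and> q \<le> N}"
      then have pp: "prime p" by simp
      have m: "pcomp C p x \<in> primary C p" "pcomp C p y \<in> primary C p" "pcomp C p z \<in> primary C p"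
        using pcomp_primary pp xyz by auto
      show "F p (pcomp C p y, pcomp C p z) - F p (pcomp C p (x + y), pcomp C p z)
          + F p (pcomp C p x, pcomp C p (y + z)) - F p (pcomp C p x, pcomp C p y) = 0"
        using zcoc_D(4)[OF Fz[OF pp] m] pcomp_add[of x y p] pcomp_add[of y z p] xyz pp by simp
    qed
    finally show "c (y, z) - c (x + y, z) + c (x, y + z) - c (x, y) = 0" .
  qed
  have cbw: "c \<in> bwcoc C A"
  proof -
    have "is_cobd_on S A c" if S: "finite S" "subgrp S" "S \<subseteq> C" for S
    proof -
      define \<Psi> where "\<Psi> p = (SOME \<psi>. (\<forall>z\<in>pcomp C p ` S. \<psi> z \<in> primary A p) \<and>
          (\<forall>a\<in>pcomp C p ` S. \<forall>b\<in>pcomp C p ` S. F p (a, b) = \<psi> b - \<psi> (a + b) + \<psi> a))" for p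
      have \<Psi>: "(\<forall>z\<in>pcomp C p ` S. \<Psi> p z \<in> primary A p) \<and>
          (\<forall>a\<in>pcomp C p ` S. \<forall>b\<in>pcomp C p ` S. F p (a, b) = \<Psi> p b - \<Psi> p (a + b) + \<Psi> p a)"
        if pp: "prime p" for p
      proof -
        have "finite (pcomp C p ` S)" "subgrp (pcomp C p ` S)" "pcomp C p ` S \<subseteq> primary C p"
          using S pcomp_img_subgrp[OF S(2,3) pp] pcomp_primary pp by auto
        then have ex: "\<exists>\<psi>. (\<forall>z\<in>pcomp C p ` S. \<psi> z \<in> primary A p) \<and>
          (\<forall>a\<in>pcomp C p ` S. \<forall>b\<in>pcomp C p ` S. F p (a, b) = \<psi> b - \<psi> (a + b) + \<psi> a)"
          using Fp[OF pp] unfolding bwcoc_def is_cobd_on_def by blast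
        show ?thesis unfolding \<Psi>_def by (rule someI_ex[OF ex])
      qed
      have S0: "0 \<in> pcomp C p ` S" for p using subgrp_0[OF S(2)] pcomp_0 by (metis image_eqI)
      have \<Psi>0: "\<Psi> p 0 = 0" if pp: "prime p" for p
      proof -
        have "F p (0, 0) = \<Psi> p 0 - \<Psi> p (0 + 0) + \<Psi> p 0" using bspec[OF bspec[OF conjunct2[OF \<Psi>[OF pp]] S0[of p]] S0[of p]] .
        then show ?thesis using F00[OF pp] by simp
      qed
      define \<phi> where "\<phi> x = (\<Sum>p\<in>{q. prime q \<and> q \<le> bd x}. \<Psi> p (pcomp C p x))" for x
      have \<phi>N: "\<phi> x = (\<Sum>p\<in>{q. prime q \<and> q \<le> N}. \<Psi> p (pcomp C p x))" if "x \<in> C" "bd x \<le> N" for x N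
        unfolding \<phi>_def by (rule sum_stab[symmetric]) (use that pcomp_big \<Psi>0 in auto)
      show ?thesis unfolding is_cobd_on_def
      proof (intro exI[of _ \<phi>] conjI ballI)
        fix x assume x: "x \<in> S"
        show "\<phi> x \<in> A" unfolding \<phi>_def
          by (intro subgrp_sum[OF sgA]) (use \<Psi> x Ap_A in blast)
      next
        fix x y assume xy: "x \<in> S" "y \<in> S"
        have xyC: "x \<in> C" "y \<in> C" "x + y \<in> C" using xy S sg subgrp_add by blast+
        define N where "N = bd x + bd y + bd (x + y)"
        have "c (x, y) = (\<Sum>p\<in>{q. prime q \<and> q \<le> N}. F p (pcomp C p x, pcomp C p y))"
          using ceq[of x y N] xyC N_def by simp
        also have "\<dots> = (\<Sum>p\<in>{q. prime q \<and> q \<le> N}. \<Psi> p (pcomp C p y) - \<Psi> p (pcomp C p (x + y)) + \<Psi> p (pcomp C p x))"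
        proof (rule sum.cong)
          fix p assume "p \<in> {q. prime q \<and> q \<le> N}"
          then have pp: "prime p" by simp
          have "pcomp C p x \<in> pcomp C p ` S" "pcomp C p y \<in> pcomp C p ` S" using xy by auto
          then show "F p (pcomp C p x, pcomp C p y) = \<Psi> p (pcomp C p y) - \<Psi> p (pcomp C p (x + y)) + \<Psi> p (pcomp C p x)"
            using \<Psi>[OF pp] pcomp_add[of x y p] xyC pp xy by simp
        qed simp
        also have "\<dots> = \<phi> y - \<phi> (x + y) + \<phi> x"
          using \<phi>N[of x N] \<phi>N[of y N] \<phi>N[of "x + y" N] xyC N_def
          by (simp add: sum_subtractf sum.distrib)
        finally show "c (x, y) = \<phi> y - \<phi> (x + y) + \<phi> x" .
      qed
    qed
    then show ?thesis using cz unfolding bwcoc_def by blast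
  qed
  have cCp: "c (x, y) = F p (x, y)" if pp: "prime p" and xy: "x \<in> primary C p" "y \<in> primary C p" for p x y
  proof -
    have xyC: "x \<in> C" "y \<in> C" using xy Cp_C by auto
    define N where "N = bd x + bd y + p"
    have "c (x, y) = (\<Sum>q\<in>{q. prime q \<and> q \<le> N}. F q (pcomp C q x, pcomp C q y))"
      using ceq[of x y N] xyC N_def by simp
    also have "\<dots> = F p (pcomp C p x, pcomp C p y)"
    proof -
      have pin: "p \<in> {q. prime q \<and> q \<le> N}" using N_def pp by auto
      have "(\<Sum>q\<in>{q. prime q \<and> q \<le> N} - {p}. F q (pcomp C q x, pcomp C q y)) = 0"
      proof (rule sum.neutral, intro ballI)
        fix q assume "q \<in> {q. prime q \<and> q \<le> N} - {p}"
        then show "F q (pcomp C q x, pcomp C q y) = 0"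
          using pcomp_other[OF xy(1)] pcomp_other[OF xy(2)] pp F00 by simp
      qed
      then show ?thesis using sum.remove[OF Qs_finite pin, of "\<lambda>q. F q (pcomp C q x, pcomp C q y)"] by simp
    qed
    also have "\<dots> = F p (x, y)" using pcomp_self xy by simp
    finally show ?thesis .
  qed
  have "psub C F (FF C A c) \<in> prod_b C A"
    unfolding prod_b_def
  proof (rule PiE_I)
    fix p assume "p \<in> primes_set"
    then have pp: "prime p" by (simp add: primes_set_def)
    have z: "csub (primary C p) (F p) (fp C A c p) \<in> zcoc (primary C p) (primary A p)"
      using zcoc_csub[OF sgCp sgAp Fz[OF pp] fp_zcoc[OF cbw pp]] .
    have ph: "phic A c p z \<in> primary A p" if z: "z \<in> primary C p" for z
    proof -
      have s: "phic A c p z \<in> A \<and> nsmul (p ^ ordk p z) (phic A c p z) = sig c p z"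
        using phi_spec[OF cbw pp z] .
      have "sig c p z \<in> primary A p" unfolding sig_def
        by (intro subgrp_sum[OF sgAp]) (use cCp[OF pp] Fv[OF pp] subgrp_nsmul[OF sgCp z] z in auto)
      then show ?thesis using s primary_from_nsmul by metis
    qed
    have "is_cobd_on (primary C p) (primary A p) (csub (primary C p) (F p) (fp C A c p))"
      unfolding is_cobd_on_def
    proof (intro exI[of _ "phic A c p"] conjI ballI)
      fix z assume "z \<in> primary C p" then show "phic A c p z \<in> primary A p" using ph by blast
    next
      fix x y assume xy: "x \<in> primary C p" "y \<in> primary C p"
      have "x + y \<in> primary C p" using xy sgCp subgrp_add by blast
      then show "csub (primary C p) (F p) (fp C A c p) (x, y) = phic A c p y - phic A c p (x + y) + phic A c p x"
        using xy cCp[OF pp xy] by (simp add: csub_def fp_app)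
    qed
    then show "psub C F (FF C A c) p \<in> bcoc (primary C p) (primary A p)"
      using z \<open>p \<in> primes_set\<close> by (simp add: psub_app FF_app bcoc_def)
  next
    fix p assume "p \<notin> primes_set" then show "psub C F (FF C A c) p = undefined"
      unfolding psub_def by simp
  qed
  then show ?thesis using cbw by blast
qed

end


lemma fin_dep_meas:
  fixes h :: "('i \<Rightarrow> 'b) \<Rightarrow> 'z"
  assumes J: "finite J" "J \<subseteq> I" and B: "countable B"
    and dep: "\<And>c c'. (\<forall>j\<in>J. c j = c' j) \<Longrightarrow> h c = h c'"
  shows "h -` T \<inter> space (PiM I (\<lambda>_. count_space B)) \<in> sets (PiM I (\<lambda>_. count_space B))"
proof -
  let ?M = "PiM I (\<lambda>_. count_space B)"
  define R where "R = (\<lambda>c. restrict c J) ` (h -` T \<inter> space ?M)"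
  have RP: "R \<subseteq> (\<Pi>\<^sub>E j\<in>J. B)" unfolding R_def using J by (auto simp: space_PiM PiE_def Pi_def)
  have cR: "countable R" using countable_subset[OF RP countable_PiE[OF J(1)]] B by blast
  have eq: "h -` T \<inter> space ?M = {c \<in> space ?M. \<exists>r\<in>R. \<forall>j\<in>J. c j = r j}"
  proof (intro equalityI subsetI)
    fix c assume c: "c \<in> h -` T \<inter> space ?M"
    then have "restrict c J \<in> R" unfolding R_def by blast
    then show "c \<in> {c \<in> space ?M. \<exists>r\<in>R. \<forall>j\<in>J. c j = r j}" using c
      by (auto intro!: bexI[of _ "restrict c J"])
  next
    fix c assume c: "c \<in> {c \<in> space ?M. \<exists>r\<in>R. \<forall>j\<in>J. c j = r j}"
    then obtain c' where c': "c' \<in> h -` T \<inter> space ?M" "\<forall>j\<in>J. c j = c' j"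
      unfolding R_def by auto
    then have "h c = h c'" using dep by blast
    then show "c \<in> h -` T \<inter> space ?M" using c c' by auto
  qed
  have "{c \<in> space ?M. \<exists>r\<in>R. \<forall>j\<in>J. c j = r j} \<in> sets ?M"
  proof (rule sets.sets_Collect_countable_Ex'[OF _ cR])
    fix r assume r: "r \<in> R"
    show "{c \<in> space ?M. \<forall>j\<in>J. c j = r j} \<in> sets ?M"
    proof (rule sets.sets_Collect_finite_All[OF _ J(1)])
      fix j assume j: "j \<in> J"
      then have jI: "j \<in> I" using J by blast
      have rj: "r j \<in> B" using RP r j by (auto simp: PiE_def Pi_def)
      have "(\<lambda>c. c j) -` {r j} \<inter> space ?M \<in> sets ?M"
        using measurable_sets[OF measurable_component_singleton[OF jI], of "{r j}" "\<lambda>_. count_space B"] rj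
        by simp
      moreover have "{c \<in> space ?M. c j = r j} = (\<lambda>c. c j) -` {r j} \<inter> space ?M" by auto
      ultimately show "{c \<in> space ?M. c j = r j} \<in> sets ?M" by simp
    qed
  qed
  then show ?thesis using eq by simp
qed

context setting
begin

lemma sig_dep:
  assumes "\<forall>i<p ^ ordk p z. c (nsmul i z, z) = c' (nsmul i z, z)"
  shows "sig c p z = sig c' p z"
  unfolding sig_def using assms by simp

lemma phic_dep:
  assumes "\<forall>i<p ^ ordk p z. c (nsmul i z, z) = c' (nsmul i z, z)"
  shows "phic A c p z = phic A c' p z"
  unfolding phic_def using sig_dep[OF assms] by simp

lemma comp_meas:
  assumes cA: "countable A" and pp: "prime p" and xy: "x \<in> primary C p" "y \<in> primary C p"
  shows "(\<lambda>c. fp C A c p (x, y)) \<in> measurable (restrict_space (cocM C A) (bwcoc C A)) (count_space (primary A p))"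
proof -
  let ?M = "PiM (C \<times> C) (\<lambda>_. count_space A)"
  define h where "h c = c (x, y) - (phic A c p y - phic A c p (x + y) + phic A c p x)" for c :: "'c \<times> 'c \<Rightarrow> 'a"
  have s: "x + y \<in> primary C p" using xy sgCp subgrp_add by blast
  have fh: "fp C A c p (x, y) = h c" for c using fp_app[OF xy] h_def by simp
  define Jz where "Jz z = (\<lambda>i. (nsmul i z, z)) ` {..<p ^ ordk p z}" for z :: 'c
  define J where "J = {(x, y)} \<union> Jz x \<union> Jz y \<union> Jz (x + y)"
  have Jf: "finite J" unfolding J_def Jz_def by simp
  have JzC: "Jz z \<subseteq> C \<times> C" if "z \<in> C" for z
    unfolding Jz_def using that subgrp_nsmul[OF sg] by auto
  have JC: "J \<subseteq> C \<times> C" unfolding J_def using JzC xy s Cp_C by blast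
  have dep: "h c = h c'" if "\<forall>j\<in>J. c j = c' j" for c c'
  proof -
    have "\<forall>i<p ^ ordk p z. c (nsmul i z, z) = c' (nsmul i z, z)" if "z \<in> {x, y, x + y}" for z
      using \<open>\<forall>j\<in>J. c j = c' j\<close> that unfolding J_def Jz_def by auto
    then have "phic A c p x = phic A c' p x" "phic A c p y = phic A c' p y"
      "phic A c p (x + y) = phic A c' p (x + y)" using phic_dep by blast+
    moreover have "c (x, y) = c' (x, y)" using \<open>\<forall>j\<in>J. c j = c' j\<close> J_def by simp
    ultimately show ?thesis unfolding h_def by simp
  qed
  have pre: "h -` {a} \<inter> space ?M \<in> sets ?M" for a
    by (rule fin_dep_meas[OF Jf JC cA dep])
  show ?thesis
    unfolding fh cocM_def
  proof (subst measurable_count_space_eq_countable)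
    show "countable (primary A p)" using countable_subset[OF primary_sub cA] .
    have "h c \<in> primary A p" if "c \<in> bwcoc C A" for c using fp_val[OF that pp xy] fh by simp
    moreover have "h -` {a} \<inter> space (restrict_space ?M (bwcoc C A)) \<in> sets (restrict_space ?M (bwcoc C A))" for a
    proof -
      have "h -` {a} \<inter> space (restrict_space ?M (bwcoc C A)) = bwcoc C A \<inter> (h -` {a} \<inter> space ?M)"
        by (auto simp: space_restrict_space)
      then show ?thesis using pre[of a] by (auto simp: sets_restrict_space)
    qed
    ultimately show "h \<in> space (restrict_space ?M (bwcoc C A)) \<rightarrow> primary A p \<and>
      (\<forall>a\<in>primary A p. h -` {a} \<inter> space (restrict_space ?M (bwcoc C A)) \<in> sets (restrict_space ?M (bwcoc C A)))"
      by (auto simp: space_restrict_space)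
  qed
qed

lemma FF_meas:
  assumes cA: "countable A"
  shows "FF C A \<in> measurable (restrict_space (cocM C A) (bwcoc C A)) (prodM C A)"
proof -
  let ?N = "restrict_space (cocM C A) (bwcoc C A)"
  have sp: "space ?N = bwcoc C A \<inter> space (cocM C A)" by (simp add: space_restrict_space)
  have inner: "(\<lambda>c. FF C A c p) \<in> measurable ?N (cocM (primary C p) (primary A p))" if pI: "p \<in> primes_set" for p
  proof -
    have pp: "prime p" using pI by (simp add: primes_set_def)
    have "(\<lambda>c z. fp C A c p z) \<in> measurable ?N (PiM (primary C p \<times> primary C p) (\<lambda>_. count_space (primary A p)))"
    proof (rule measurable_PiM_single')
      fix z assume "z \<in> primary C p \<times> primary C p"
      then obtain x y where "z = (x, y)" "x \<in> primary C p" "y \<in> primary C p" by blast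
      then show "(\<lambda>c. fp C A c p z) \<in> measurable ?N (count_space (primary A p))"
        using comp_meas[OF cA pp] by simp
    next
      show "(\<lambda>c. fp C A c p) \<in> space ?N \<rightarrow> (\<Pi>\<^sub>E z\<in>primary C p \<times> primary C p. space (count_space (primary A p)))"
        using fp_zcoc[OF _ pp] sp unfolding zcoc_def by auto
    qed
    then show ?thesis using FF_app[OF pI] unfolding cocM_def by simp
  qed
  have "(\<lambda>c p. FF C A c p) \<in> measurable ?N (prodM C A)"
    unfolding prodM_def
  proof (rule measurable_PiM_single')
    fix p assume "p \<in> primes_set"
    then show "(\<lambda>c. FF C A c p) \<in> measurable ?N (cocM (primary C p) (primary A p))" using inner by blast
  next
    show "(\<lambda>c. FF C A c) \<in> space ?N \<rightarrow> (\<Pi>\<^sub>E p\<in>primes_set. space (cocM (primary C p) (primary A p)))"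
    proof
      fix c assume "c \<in> space ?N"
      then have c: "c \<in> bwcoc C A" using sp by blast
      show "FF C A c \<in> (\<Pi>\<^sub>E p\<in>primes_set. space (cocM (primary C p) (primary A p)))"
        using fp_zcoc[OF c] unfolding FF_def cocM_def zcoc_def primes_set_def
        by (auto simp: space_PiM)
    qed
  qed
  then show ?thesis by simp
qed

end


theorem lemma4p6:
  fixes C :: "'c::ab_group_add set" and A :: "'a::ab_group_add set"
  assumes "subgrp C" "countable C" "torsion_grp C"
    and "subgrp A" "countable A"
  shows "\<exists>f. bdef_iso (cocM C A) (bwcoc C A) (bcoc C A) (cadd C) (csub C)
                      (prodM C A) (prod_bw C A) (prod_b C A) (padd C) (psub C) f"
proof -
  interpret setting C A
    by unfold_locales (use assms in auto)
  show ?thesis unfolding bdef_iso_def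
  proof (intro exI[of _ "FF C A"] conjI ballI)
    show "FF C A \<in> measurable (restrict_space (cocM C A) (bwcoc C A)) (prodM C A)"
      using FF_meas[OF assms(5)] .
  next
    fix x assume "x \<in> bwcoc C A" then show "FF C A x \<in> prod_bw C A" by (rule FF_in)
  next
    fix x y assume xy: "x \<in> bwcoc C A" "y \<in> bwcoc C A"
    show "(csub C x y \<in> bcoc C A) = (psub C (FF C A x) (FF C A y) \<in> prod_b C A)"
      using FF_inj_fwd[OF xy] FF_inj_bwd[OF xy] by blast
  next
    fix x y assume xy: "x \<in> bwcoc C A" "y \<in> bwcoc C A"
    show "psub C (FF C A (cadd C x y)) (padd C (FF C A x) (FF C A y)) \<in> prod_b C A"
      using FF_hom[OF xy] .
  next
    fix z assume "z \<in> prod_bw C A"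
    then show "\<exists>x\<in>bwcoc C A. psub C z (FF C A x) \<in> prod_b C A" by (rule surj_part)
  qed
qed

end
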